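(* Let ${\cal G}$ be a closed graph, $1\le\nu\le\infty$, and let $f\in C^1_{\rm Dir}({\cal G})$ be split. Then $$\|\nabla f\|_1\ge \widetilde I_\nu({\cal G})\,\|f\|_{\nu'}.$$
   Context: A graph ${\cal G}$ consists of an undirected graph $(V,E)$ (multiple edges and self-loops allowed), edge lengths $\ell_e>0$, boundary vertices $\partial{\cal G}\subseteq V$, a vertex measure ${\cal V}$ (supported on $V$, ${\cal V}(v)>0$) and an edge measure ${\cal E}$ (zero on vertices, $a_e>0$ times Lebesgue measure on the interior of edge $e$); ${\cal G}$ is identified with its geometric realization (closed interval of length $\ell_e$ joining the endpoints of each $e$). Closed graph: finitely many vertices and edges and $\partial{\cal G}=\emptyset$. $C^1_{\rm Dir}({\cal G})$: continuous functions, uniformly continuously differentiable on each open edge, vanishing on $\partial{\cal G}$ (here all functions are of finite type since ${\cal G}$ is finite). $\|f\|_q$ is the $L^q({\cal V})$ norm, $\|\nabla f\|_1=\int|\nabla f|\,d{\cal E}$, $\nu'$ the dual exponent. $f$ is split if ${\cal V}(\{f>0\})\le {\cal V}({\cal G})/2$ and ${\cal V}(\{f<0\})\le{\cal V}({\cal G})/2$. For open $\Omega$ with finite boundary, ${\cal A}(\partial\Omega)=\sum_{x\in\partial\Omega\setminus V}a_{e(x)}+\sum_{v\in\partial\Omega\cap V}\sum_{e:\,v\in\overline{\Omega\cap e^\circ}}a_e$ ($e(x)$ the edge containing $x$, $e^\circ$ the open interior of $e$). $\Omega$ is admissible if open, with finite boundary, disjoint from $\partial{\cal G}$. $\widetilde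 I_\nu({\cal G})=\inf_{\Omega\text{ admissible}}{\cal A}(\partial\Omega)\min({\cal V}(\Omega),{\cal V}(\complement\Omega))^{(1/\nu)-1}$. *)

theory Defs
  imports "HOL-Analysis.Analysis"
begin

text \<open>Edges are abstract indices (so multiple edges and
self-loops are allowed); edge e joins src e to tgt e, has length len e and
edge weight wt e (the density a_e of the edge measure); vmeas is the vertex
measure; bverts are the boundary vertices.\<close>

record ('v, 'e) mgraph =
  verts  :: "'v set"
  edges  :: "'e set"
  src    :: "'e \<Rightarrow> 'v"
  tgt    :: "'e \<Rightarrow> 'v"
  len    :: "'e \<Rightarrow> real"
  wt     :: "'e \<Rightarrow> real"
  vmeas  :: "'v \<Rightarrow> real"
  bverts :: "'v set"

text \<open>Points of the geometric realization: a vertex, or an interior point of edge e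
at distance t (0 < t < len e) from src e.\<close>

datatype ('v, 'e) gpt = Vert 'v | EPt 'e real

definition gpoints :: "('v, 'e, 'z) mgraph_scheme \<Rightarrow> ('v, 'e) gpt set" where
  "gpoints G = Vert ` verts G \<union> {EPt e t | e t. e \<in> edges G \<and> 0 < t \<and> t < len G e}"

definition closed_graph :: "('v, 'e, 'z) mgraph_scheme \<Rightarrow> bool" where
  "closed_graph G \<longleftrightarrow> finite (verts G) \<and> finite (edges G) \<and> bverts G = {} \<and>
     (\<forall>e\<in>edges G. src G e \<in> verts G \<and> tgt G e \<in> verts G \<and> 0 < len G e \<and> 0 < wt G e) \<and>
     (\<forall>v\<in>verts G. 0 < vmeas G v)"

definition gnbhd :: "('v, 'e, 'z) mgraph_scheme \<Rightarrow> ('v, 'e) gpt \<Rightarrow> real \<Rightarrow> ('v, 'e) gpt set" where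
  "gnbhd G x eps = (case x of
      Vert v \<Rightarrow> {Vert v}
        \<union> {EPt e t | e t. e \<in> edges G \<and> src G e = v \<and> 0 < t \<and> t < eps \<and> t < len G e}
        \<union> {EPt e t | e t. e \<in> edges G \<and> tgt G e = v \<and> 0 < t \<and> len G e - eps < t \<and> t < len G e}
    | EPt e s \<Rightarrow> {EPt e t | t. 0 < t \<and> t < len G e \<and> \<bar>t - s\<bar> < eps})"

definition gopen :: "('v, 'e, 'z) mgraph_scheme \<Rightarrow> ('v, 'e) gpt set \<Rightarrow> bool" where
  "gopen G S \<longleftrightarrow> S \<subseteq> gpoints G \<and> (\<forall>x\<in>S. \<exists>eps>0. gnbhd G x eps \<subseteq> S)"

definition gclosure :: "('v, 'e, 'z) mgraph_scheme \<Rightarrow> ('v, 'e) gpt set \<Rightarrow> ('v, 'e) gpt set" where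
  "gclosure G S = {x \<in> gpoints G. \<forall>eps>0. gnbhd G x eps \<inter> S \<noteq> {}}"

definition ginterior :: "('v, 'e, 'z) mgraph_scheme \<Rightarrow> ('v, 'e) gpt set \<Rightarrow> ('v, 'e) gpt set" where
  "ginterior G S = {x \<in> S \<inter> gpoints G. \<exists>eps>0. gnbhd G x eps \<subseteq> S}"

definition gfrontier :: "('v, 'e, 'z) mgraph_scheme \<Rightarrow> ('v, 'e) gpt set \<Rightarrow> ('v, 'e) gpt set" where
  "gfrontier G S = gclosure G S - ginterior G S"

definition edge_interior :: "('v, 'e, 'z) mgraph_scheme \<Rightarrow> 'e \<Rightarrow> ('v, 'e) gpt set" where
  "edge_interior G e = {EPt e t | t. 0 < t \<and> t < len G e}"

definition vmeasure :: "('v, 'e, 'z) mgraph_scheme \<Rightarrow> ('v, 'e) gpt set \<Rightarrow> real" where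
  "vmeasure G S = (\<Sum>v\<in>{v \<in> verts G. Vert v \<in> S}. vmeas G v)"

definition pt_edge :: "('v, 'e) gpt \<Rightarrow> 'e" where
  "pt_edge x = (case x of EPt e t \<Rightarrow> e | Vert v \<Rightarrow> undefined)"

definition bdry_area :: "('v, 'e, 'z) mgraph_scheme \<Rightarrow> ('v, 'e) gpt set \<Rightarrow> real" where
  "bdry_area G \<Omega> =
     (\<Sum>x\<in>{x \<in> gfrontier G \<Omega>. x \<notin> Vert ` verts G}. wt G (pt_edge x))
   + (\<Sum>v\<in>{v \<in> verts G. Vert v \<in> gfrontier G \<Omega>}.
        \<Sum>e\<in>{e \<in> edges G. Vert v \<in> gclosure G (\<Omega> \<inter> edge_interior G e)}. wt G e)"

definition admissible :: "('v, 'e, 'z) mgraph_scheme \<Rightarrow> ('v, 'e) gpt set \<Rightarrow> bool" where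
  "admissible G \<Omega> \<longleftrightarrow> gopen G \<Omega> \<and> finite (gfrontier G \<Omega>) \<and> \<Omega> \<inter> Vert ` bverts G = {}"

definition inv_exp :: "ereal \<Rightarrow> real" where
  "inv_exp \<nu> = (if \<nu> = \<infinity> then 0 else 1 / real_of_ereal \<nu>)"

definition dual_exp :: "ereal \<Rightarrow> ereal" where
  "dual_exp \<nu> = (if \<nu> = 1 then \<infinity> else if \<nu> = \<infinity> then 1
                  else ereal (real_of_ereal \<nu> / (real_of_ereal \<nu> - 1)))"

definition iso_const :: "('v, 'e, 'z) mgraph_scheme \<Rightarrow> ereal \<Rightarrow> real" where
  "iso_const G \<nu> = (INF \<Omega>\<in>{\<Omega>. admissible G \<Omega> \<and> 0 < vmeasure G \<Omega> \<and> 0 < vmeasure G (gpoints G - \<Omega>)}.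
      bdry_area G \<Omega> * min (vmeasure G \<Omega>) (vmeasure G (gpoints G - \<Omega>)) powr (inv_exp \<nu> - 1))"

definition lq_norm :: "('v, 'e, 'z) mgraph_scheme \<Rightarrow> ereal \<Rightarrow> (('v, 'e) gpt \<Rightarrow> real) \<Rightarrow> real" where
  "lq_norm G q f = (if q = \<infinity> then Max (insert 0 ((\<lambda>v. \<bar>f (Vert v)\<bar>) ` verts G))
     else (\<Sum>v\<in>verts G. vmeas G v * \<bar>f (Vert v)\<bar> powr real_of_ereal q) powr (1 / real_of_ereal q))"

definition grad_norm1 :: "('v, 'e, 'z) mgraph_scheme \<Rightarrow> (('v, 'e) gpt \<Rightarrow> real) \<Rightarrow> real" where
  "grad_norm1 G f = (\<Sum>e\<in>edges G. wt G e *
       integral {0<..<len G e} (\<lambda>t. \<bar>deriv (\<lambda>s. f (EPt e s)) t\<bar>))"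

definition C1_Dir :: "('v, 'e, 'z) mgraph_scheme \<Rightarrow> (('v, 'e) gpt \<Rightarrow> real) \<Rightarrow> bool" where
  "C1_Dir G f \<longleftrightarrow>
     (\<forall>x\<in>gpoints G. \<forall>\<delta>>0. \<exists>eps>0. \<forall>y\<in>gnbhd G x eps. \<bar>f y - f x\<bar> < \<delta>) \<and>
     (\<forall>e\<in>edges G. \<exists>g'. (\<forall>t\<in>{0<..<len G e}. ((\<lambda>s. f (EPt e s)) has_real_derivative g' t) (at t))
                     \<and> uniformly_continuous_on {0<..<len G e} g') \<and>
     (\<forall>v\<in>bverts G. f (Vert v) = 0)"

definition split_fun :: "('v, 'e, 'z) mgraph_scheme \<Rightarrow> (('v, 'e) gpt \<Rightarrow> real) \<Rightarrow> bool" where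
  "split_fun G f \<longleftrightarrow> vmeasure G {x. f x > 0} \<le> vmeasure G (gpoints G) / 2 \<and>
                      vmeasure G {x. f x < 0} \<le> vmeasure G (gpoints G) / 2"

end

theory Submission
  imports Defs
begin


lemma conv_powr:
  fixes u v l p :: real
  assumes "0 \<le> l" "l \<le> 1" "0 \<le> u" "0 \<le> v" "1 \<le> p"
  shows "(l * u + (1 - l) * v) powr p \<le> l * u powr p + (1 - l) * v powr p"
proof -
  have key: "(c * z) powr p \<le> c * z powr p" if "0 \<le> c" "c \<le> 1" "0 \<le> z" for c z :: real
  proof -
    have "c powr p \<le> c"
      using that assms powr_le_one_le[of c p] by (cases "c = 0") auto
    then show ?thesis using that by (simp add: powr_mult mult_right_mono)
  qed
  show ?thesis
  proof (cases "u = 0")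
    case True
    then show ?thesis using key[of "1-l" v] assms by simp
  next
    case u: False
    show ?thesis
    proof (cases "v = 0")
      case True
      then show ?thesis using key[of l u] assms by simp
    next
      case False
      then have "u > 0" "v > 0" using u assms by auto
      have "convex_on {0<..} (\<lambda>x::real. x powr p)" using powr_convex assms by blast
      from convex_onD[OF this, of l v u] assms \<open>u>0\<close> \<open>v>0\<close>
      show ?thesis by (simp add: algebra_simps)
    qed
  qed
qed

lemma minkowski:
  fixes A :: "'a set" and m a b :: "'a \<Rightarrow> real" and p :: real
  assumes fin: "finite A" and m: "\<And>v. v \<in> A \<Longrightarrow> 0 \<le> m v"
    and a: "\<And>v. v \<in> A \<Longrightarrow> 0 \<le> a v" and b: "\<And>v. v \<in> A \<Longrightarrow> 0 \<le> b v"
    and p: "1 \<le> p"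
  shows "(\<Sum>v\<in>A. m v * (a v + b v) powr p) powr (1/p)
     \<le> (\<Sum>v\<in>A. m v * a v powr p) powr (1/p) + (\<Sum>v\<in>A. m v * b v powr p) powr (1/p)"
proof -
  define SA where "SA = (\<Sum>v\<in>A. m v * a v powr p)"
  define SB where "SB = (\<Sum>v\<in>A. m v * b v powr p)"
  define Ua where "Ua = SA powr (1/p)"
  define Ub where "Ub = SB powr (1/p)"
  have SA0: "0 \<le> SA" unfolding SA_def using m a by (intro sum_nonneg) auto
  have SB0: "0 \<le> SB" unfolding SB_def using m b by (intro sum_nonneg) auto
  show ?thesis
  proof (cases "SA = 0")
    case True
    have "\<forall>v\<in>A. m v * a v powr p = 0"
      using True unfolding SA_def using sum_nonneg_eq_0_iff[OF fin] m a by (simp add: sum_nonneg_eq_0_iff[OF fin])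
    then have "\<forall>v\<in>A. m v * (a v + b v) powr p = m v * b v powr p"
      using a by auto
    then have "(\<Sum>v\<in>A. m v * (a v + b v) powr p) = SB" unfolding SB_def by (intro sum.cong) auto
    then show ?thesis using True unfolding SA_def[symmetric] SB_def[symmetric] by simp
  next
    case SAn: False
    show ?thesis
    proof (cases "SB = 0")
      case True
      have "\<forall>v\<in>A. m v * b v powr p = 0"
        using True unfolding SB_def using m b by (simp add: sum_nonneg_eq_0_iff[OF fin])
      then have "\<forall>v\<in>A. m v * (a v + b v) powr p = m v * a v powr p"
        using b by auto
      then have "(\<Sum>v\<in>A. m v * (a v + b v) powr p) = SA" unfolding SA_def by (intro sum.cong) auto
      then show ?thesis using True unfolding SA_def[symmetric] SB_def[symmetric] by simp
    next
      case SBn: False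
      have Ua: "Ua > 0" "Ua powr p = SA" unfolding Ua_def using SA0 SAn p by (auto simp: powr_powr)
      have Ub: "Ub > 0" "Ub powr p = SB" unfolding Ub_def using SB0 SBn p by (auto simp: powr_powr)
      define l where "l = Ua / (Ua + Ub)"
      have l: "0 \<le> l" "l \<le> 1" using Ua Ub unfolding l_def by auto
      have pt: "m v * ((a v + b v) / (Ua + Ub)) powr p \<le> l * (m v * a v powr p / SA) + (1 - l) * (m v * b v powr p / SB)"
        if v: "v \<in> A" for v
      proof -
        have eq: "(a v + b v) / (Ua + Ub) = l * (a v / Ua) + (1 - l) * (b v / Ub)"
        proof -
          have l1: "1 - l = Ub / (Ua + Ub)" using Ua Ub unfolding l_def by (simp add: field_simps)
          have e1: "l * (a v / Ua) = a v / (Ua + Ub)" using Ua unfolding l_def by simp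
          have e2: "(1 - l) * (b v / Ub) = b v / (Ua + Ub)" using Ub unfolding l1 by simp
          show ?thesis unfolding e1 e2 by (simp add: add_divide_distrib)
        qed
        have "((a v + b v) / (Ua + Ub)) powr p \<le> l * (a v / Ua) powr p + (1 - l) * (b v / Ub) powr p"
          unfolding eq using conv_powr[OF l, of "a v / Ua" "b v / Ub" p] a[OF v] b[OF v] Ua Ub p by auto
        also have "\<dots> = l * (a v powr p / SA) + (1 - l) * (b v powr p / SB)"
          using a[OF v] b[OF v] Ua Ub by (simp add: powr_divide)
        finally have "m v * ((a v + b v) / (Ua + Ub)) powr p \<le> m v * (l * (a v powr p / SA) + (1 - l) * (b v powr p / SB))"
          using m[OF v] by (rule mult_left_mono)
        also have "\<dots> = l * (m v * a v powr p / SA) + (1 - l) * (m v * b v powr p / SB)"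
          by (simp add: algebra_simps)
        finally show ?thesis .
      qed
      have "(\<Sum>v\<in>A. m v * ((a v + b v) / (Ua + Ub)) powr p) \<le>
          (\<Sum>v\<in>A. l * (m v * a v powr p / SA) + (1 - l) * (m v * b v powr p / SB))"
        using pt by (intro sum_mono) auto
      also have "\<dots> = l * ((\<Sum>v\<in>A. m v * a v powr p) / SA) + (1 - l) * ((\<Sum>v\<in>A. m v * b v powr p) / SB)"
        by (simp only: sum.distrib sum_divide_distrib sum_distrib_left)
      also have "\<dots> = l * (SA / SA) + (1 - l) * (SB / SB)"
        by (simp only: SA_def[symmetric] SB_def[symmetric])
      also have "\<dots> = 1" using SAn SBn by simp
      finally have le1: "(\<Sum>v\<in>A. m v * ((a v + b v) / (Ua + Ub)) powr p) \<le> 1" .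
      have "(\<Sum>v\<in>A. m v * ((a v + b v) / (Ua + Ub)) powr p) = (\<Sum>v\<in>A. m v * (a v + b v) powr p) / (Ua + Ub) powr p"
        using a b Ua Ub by (simp add: powr_divide sum_divide_distrib)
      with le1 have "(\<Sum>v\<in>A. m v * (a v + b v) powr p) \<le> (Ua + Ub) powr p"
        using Ua Ub by (simp add: divide_le_eq)
      then have "(\<Sum>v\<in>A. m v * (a v + b v) powr p) powr (1/p) \<le> ((Ua + Ub) powr p) powr (1/p)"
        using p m a b by (intro powr_mono2) (auto intro!: sum_nonneg)
      also have "\<dots> = Ua + Ub" using Ua Ub p by (simp add: powr_powr)
      finally show ?thesis unfolding Ua_def Ub_def SA_def SB_def .
    qed
  qed
qed



definition cutw :: "'e set \<Rightarrow> ('e \<Rightarrow> real) \<Rightarrow> ('e \<Rightarrow> 'v) \<Rightarrow> ('e \<Rightarrow> 'v) \<Rightarrow> 'v set \<Rightarrow> real" where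
  "cutw E w s t S = (\<Sum>e\<in>{e\<in>E. (s e \<in> S) \<noteq> (t e \<in> S)}. w e)"

definition Dv :: "'e set \<Rightarrow> ('e \<Rightarrow> real) \<Rightarrow> ('e \<Rightarrow> 'v) \<Rightarrow> ('e \<Rightarrow> 'v) \<Rightarrow> ('v \<Rightarrow> real) \<Rightarrow> real" where
  "Dv E w s t x = (\<Sum>e\<in>E. w e * \<bar>x (s e) - x (t e)\<bar>)"

definition vnorm :: "'v set \<Rightarrow> ('v \<Rightarrow> real) \<Rightarrow> real \<Rightarrow> ('v \<Rightarrow> real) \<Rightarrow> real" where
  "vnorm V m r x = (if r = 0 then Max (insert 0 ((\<lambda>v. \<bar>x v\<bar>) ` V))
     else (\<Sum>v\<in>V. m v * \<bar>x v\<bar> powr (1/r)) powr r)"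

definition vsplit :: "'v set \<Rightarrow> ('v \<Rightarrow> real) \<Rightarrow> ('v \<Rightarrow> real) \<Rightarrow> bool" where
  "vsplit V m x \<longleftrightarrow> (\<Sum>v\<in>{v\<in>V. x v > 0}. m v) \<le> (\<Sum>v\<in>V. m v) / 2 \<and>
                     (\<Sum>v\<in>{v\<in>V. x v < 0}. m v) \<le> (\<Sum>v\<in>V. m v) / 2"

locale dsetup =
  fixes V :: "'v set" and m :: "'v \<Rightarrow> real" and E :: "'e set" and w :: "'e \<Rightarrow> real"
    and s t :: "'e \<Rightarrow> 'v" and I r :: real
  assumes finV: "finite V" and finE: "finite E" and mpos: "\<And>v. v \<in> V \<Longrightarrow> 0 < m v"
    and wnn: "\<And>e. e \<in> E \<Longrightarrow> 0 \<le> w e" and st: "\<And>e. e \<in> E \<Longrightarrow> s e \<in> V \<and> t e \<in> V"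
    and r01: "0 \<le> r" "r \<le> 1"
    and H: "\<And>S. S \<subseteq> V \<Longrightarrow> S \<noteq> {} \<Longrightarrow> sum m S \<le> sum m V / 2 \<Longrightarrow>
             I * sum m S powr r \<le> cutw E w s t S \<and> 0 \<le> I"
begin

lemma Dv_nonneg: "0 \<le> Dv E w s t x"
  unfolding Dv_def using wnn by (intro sum_nonneg) auto

lemma step_pos:
  assumes IH: "\<And>y. card (insert 0 (y ` V)) < card (insert 0 (x ` V)) \<Longrightarrow> vsplit V m y \<Longrightarrow>
                  I * vnorm V m r y \<le> Dv E w s t y"
    and sp: "vsplit V m x" and v0: "v0 \<in> V" "x v0 > 0"
  shows "I * vnorm V m r x \<le> Dv E w s t x"
proof -
  define M where "M = Max (x ` V)"
  have finx: "finite (x ` V)" using finV by simp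
  have Mge: "\<And>v. v \<in> V \<Longrightarrow> x v \<le> M" unfolding M_def using finx by auto
  have MinV: "M \<in> x ` V" unfolding M_def using finx v0 by (intro Max_in) auto
  have Mpos: "M > 0" using Mge[OF v0(1)] v0 by linarith
  define L where "L = {z \<in> x ` V. z < M}"
  define M' where "M' = Max (insert 0 L)"
  have finL: "finite L" unfolding L_def using finx by simp
  have M'0: "0 \<le> M'" unfolding M'_def using finL by simp
  have M'M: "M' < M" unfolding M'_def using finL Mpos by (auto simp: L_def)
  have M'ge: "\<And>v. v \<in> V \<Longrightarrow> x v < M \<Longrightarrow> x v \<le> M'" unfolding M'_def L_def using finL
    by (intro Max_ge) (auto simp: L_def)
  have M'in: "M' \<in> insert 0 (x ` V)"
  proof -
    have "M' \<in> insert 0 L" unfolding M'_def using finL by (intro Max_in) auto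
    then show ?thesis unfolding L_def by auto
  qed
  define S where "S = {v \<in> V. x v = M}"
  have SV: "S \<subseteq> V" unfolding S_def by auto
  have Sne: "S \<noteq> {}" using MinV unfolding S_def by auto
  define \<delta> where "\<delta> = M - M'"
  have \<delta>pos: "\<delta> > 0" unfolding \<delta>_def using M'M by simp
  define y where "y = (\<lambda>v. if x v = M then M' else x v)"
  have "insert 0 (y ` V) \<subseteq> insert 0 (x ` V) - {M}"
    using M'in M'M Mpos unfolding y_def by auto
  moreover have "card (insert 0 (x ` V) - {M}) < card (insert 0 (x ` V))"
    using MinV finx by (intro card_Diff1_less) auto
  ultimately have card_lt: "card (insert 0 (y ` V)) < card (insert 0 (x ` V))"
    using finx by (meson card_mono finite.insertI finite_Diff le_less_trans)
  have mnn: "\<And>v. v \<in> V \<Longrightarrow> 0 \<le> m v" using mpos by (simp add: less_imp_le)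
  have "(\<Sum>v\<in>{v\<in>V. y v > 0}. m v) \<le> (\<Sum>v\<in>{v\<in>V. x v > 0}. m v)"
    using finV mnn Mpos by (intro sum_mono2) (auto simp: y_def split: if_splits)
  moreover have "{v\<in>V. y v < 0} = {v\<in>V. x v < 0}" using M'0 Mpos by (auto simp: y_def)
  ultimately have spy: "vsplit V m y" using sp unfolding vsplit_def by auto
  have IHy: "I * vnorm V m r y \<le> Dv E w s t y" using IH[OF card_lt spy] .
  have edge: "w e * \<bar>x (s e) - x (t e)\<bar> = w e * \<bar>y (s e) - y (t e)\<bar> +
       (if (s e \<in> S) \<noteq> (t e \<in> S) then \<delta> * w e else 0)" if e: "e \<in> E" for e
  proof -
    have sV: "s e \<in> V" and tV: "t e \<in> V" using st[OF e] by auto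
    have "\<bar>x (s e) - x (t e)\<bar> = \<bar>y (s e) - y (t e)\<bar> + (if (s e \<in> S) \<noteq> (t e \<in> S) then \<delta> else 0)"
      using Mge[OF sV] Mge[OF tV] M'ge[OF sV] M'ge[OF tV] M'M M'0 sV tV
      unfolding y_def S_def \<delta>_def by auto
    then show ?thesis by (simp add: algebra_simps)
  qed
  have Dxy: "Dv E w s t x = Dv E w s t y + \<delta> * cutw E w s t S"
  proof -
    have "Dv E w s t x = (\<Sum>e\<in>E. w e * \<bar>y (s e) - y (t e)\<bar> +
       (if (s e \<in> S) \<noteq> (t e \<in> S) then \<delta> * w e else 0))"
      unfolding Dv_def using edge by (intro sum.cong) auto
    also have "\<dots> = Dv E w s t y + (\<Sum>e\<in>E. if (s e \<in> S) \<noteq> (t e \<in> S) then \<delta> * w e else 0)"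
      unfolding Dv_def by (simp add: sum.distrib)
    also have "(\<Sum>e\<in>E. if (s e \<in> S) \<noteq> (t e \<in> S) then \<delta> * w e else 0) = \<delta> * cutw E w s t S"
      unfolding cutw_def using finE by (simp add: sum.inter_filter[symmetric] sum_distrib_left)
    finally show ?thesis .
  qed
  have "sum m S \<le> (\<Sum>v\<in>{v\<in>V. x v > 0}. m v)"
    using finV mnn Mpos by (intro sum_mono2) (auto simp: S_def)
  then have "sum m S \<le> sum m V / 2" using sp unfolding vsplit_def by linarith
  from H[OF SV Sne this] have cut: "I * sum m S powr r \<le> cutw E w s t S" and I0: "0 \<le> I" by auto
  have mS: "sum m S > 0" using Sne SV mpos finV
    by (metis finite_subset subset_iff sum_pos)
  have absx: "\<And>v. v \<in> V \<Longrightarrow> \<bar>x v\<bar> = \<bar>y v\<bar> + (if v \<in> S then \<delta> else 0)"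
    using M'0 Mpos unfolding y_def S_def \<delta>_def by auto
  have nrm: "vnorm V m r x \<le> vnorm V m r y + \<delta> * sum m S powr r"
  proof (cases "r = 0")
    case True
    have "Max (insert 0 ((\<lambda>v. \<bar>x v\<bar>) ` V)) \<le> Max (insert 0 ((\<lambda>v. \<bar>y v\<bar>) ` V)) + \<delta>"
    proof (subst Max_le_iff)
      show "finite (insert 0 ((\<lambda>v. \<bar>x v\<bar>) ` V))" using finV by simp
      show "insert 0 ((\<lambda>v. \<bar>x v\<bar>) ` V) \<noteq> {}" by simp
      have Y: "\<And>v. v \<in> V \<Longrightarrow> \<bar>y v\<bar> \<le> Max (insert 0 ((\<lambda>v. \<bar>y v\<bar>) ` V))" "0 \<le> Max (insert 0 ((\<lambda>v. \<bar>y v\<bar>) ` V))"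
        using finV by auto
      show "\<forall>a\<in>insert 0 ((\<lambda>v. \<bar>x v\<bar>) ` V). a \<le> Max (insert 0 ((\<lambda>v. \<bar>y v\<bar>) ` V)) + \<delta>"
      proof
        fix a assume "a \<in> insert 0 ((\<lambda>v. \<bar>x v\<bar>) ` V)"
        then show "a \<le> Max (insert 0 ((\<lambda>v. \<bar>y v\<bar>) ` V)) + \<delta>"
          using Y absx \<delta>pos by (force split: if_splits)
      qed
    qed
    then show ?thesis using True mS unfolding vnorm_def by simp
  next
    case False
    then have r0: "r > 0" using r01 by simp
    define p where "p = 1 / r"
    have p1: "1 \<le> p" unfolding p_def using r0 r01 by simp
    have rp: "r = 1 / p" unfolding p_def using r0 by simp
    define b where "b = (\<lambda>v. if v \<in> S then \<delta> else 0)"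
    have "(\<Sum>v\<in>V. m v * \<bar>x v\<bar> powr p) = (\<Sum>v\<in>V. m v * (\<bar>y v\<bar> + b v) powr p)"
      using absx unfolding b_def by (intro sum.cong) auto
    then have "(\<Sum>v\<in>V. m v * \<bar>x v\<bar> powr p) powr (1/p) \<le>
       (\<Sum>v\<in>V. m v * \<bar>y v\<bar> powr p) powr (1/p) + (\<Sum>v\<in>V. m v * b v powr p) powr (1/p)"
      using minkowski[of V m "\<lambda>v. \<bar>y v\<bar>" b p, OF finV mnn] p1 \<delta>pos unfolding b_def by auto
    moreover have "(\<Sum>v\<in>V. m v * b v powr p) = \<delta> powr p * sum m S"
    proof -
      have "(\<Sum>v\<in>V. m v * b v powr p) = (\<Sum>v\<in>V. if v \<in> S then \<delta> powr p * m v else 0)"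
        unfolding b_def using p1 by (intro sum.cong) auto
      also have "\<dots> = (\<Sum>v\<in>S. \<delta> powr p * m v)"
        using SV finV by (simp add: sum.If_cases Int_absorb1)
      finally show ?thesis by (simp add: sum_distrib_left)
    qed
    moreover have "(\<delta> powr p * sum m S) powr (1/p) = \<delta> * sum m S powr (1/p)"
      using \<delta>pos mS p1 by (simp add: powr_mult powr_powr)
    ultimately show ?thesis using False unfolding vnorm_def p_def[symmetric] rp by simp
  qed
  have "I * vnorm V m r x \<le> I * (vnorm V m r y + \<delta> * sum m S powr r)"
    using nrm I0 by (rule mult_left_mono)
  also have "\<dots> = I * vnorm V m r y + \<delta> * (I * sum m S powr r)" by (simp add: algebra_simps)
  also have "\<dots> \<le> Dv E w s t y + \<delta> * cutw E w s t S"
    using IHy cut \<delta>pos by (intro add_mono mult_left_mono) auto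
  finally show ?thesis using Dxy by simp
qed

lemma discrete_main:
  assumes "vsplit V m x"
  shows "I * vnorm V m r x \<le> Dv E w s t x"
proof -
  have "\<And>x. card (insert 0 (x ` V)) = n \<Longrightarrow> vsplit V m x \<Longrightarrow> I * vnorm V m r x \<le> Dv E w s t x" for n
  proof (induction n rule: less_induct)
    case (less n x)
    have IH: "\<And>y. card (insert 0 (y ` V)) < card (insert 0 (x ` V)) \<Longrightarrow> vsplit V m y \<Longrightarrow>
                  I * vnorm V m r y \<le> Dv E w s t y" using less by auto
    show ?case
    proof (cases "\<exists>v\<in>V. x v > 0")
      case True
      then show ?thesis using step_pos[OF IH less(3)] by blast
    next
      case npos: False
      show ?thesis
      proof (cases "\<exists>v\<in>V. x v < 0")
        case True
        define x' where "x' = (\<lambda>v. - x v)"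
        have "insert 0 (x' ` V) = uminus ` insert 0 (x ` V)" unfolding x'_def by auto
        moreover have "card (uminus ` insert 0 (x ` V)) = card (insert 0 (x ` V))"
          by (rule card_image) (simp add: inj_on_def)
        ultimately have ceq: "card (insert 0 (x' ` V)) = card (insert 0 (x ` V))"
          by simp
        have sp': "vsplit V m x'" using less(3) unfolding vsplit_def x'_def by auto
        obtain v0 where "v0 \<in> V" "x' v0 > 0" using True unfolding x'_def by auto
        from step_pos[of x', OF _ sp' this] IH ceq
        have "I * vnorm V m r x' \<le> Dv E w s t x'" by auto
        moreover have "vnorm V m r x' = vnorm V m r x" unfolding vnorm_def x'_def by simp
        moreover have "Dv E w s t x' = Dv E w s t x" unfolding Dv_def x'_def
          by (intro sum.cong) (auto simp: abs_minus_commute)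
        ultimately show ?thesis by simp
      next
        case False
        then have z: "\<And>v. v \<in> V \<Longrightarrow> x v = 0" using npos by force
        have "vnorm V m r x = 0"
        proof (cases "V = {}")
          case True then show ?thesis unfolding vnorm_def by simp
        next
          case False
          then have eq: "insert 0 ((\<lambda>v. \<bar>x v\<bar>) ` V) = {0}" using z by auto
          have "Max (insert 0 ((\<lambda>v. \<bar>x v\<bar>) ` V)) = 0" by (simp only: eq) simp
          moreover have "(\<Sum>v\<in>V. m v * \<bar>x v\<bar> powr (1/r)) = 0" using z by simp
          ultimately show ?thesis unfolding vnorm_def by simp
        qed
        then show ?thesis using Dv_nonneg by simp
      qed
    qed
  qed
  then show ?thesis using assms by blast
qed

end



lemma edge_ftc:
  fixes \<phi> g' :: "real \<Rightarrow> real" and L A B :: real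
  assumes L: "0 < L"
    and der: "\<And>\<tau>. \<tau> \<in> {0<..<L} \<Longrightarrow> (\<phi> has_real_derivative g' \<tau>) (at \<tau>)"
    and uc: "uniformly_continuous_on {0<..<L} g'"
    and limA: "(\<phi> \<longlongrightarrow> A) (at_right 0)" and limB: "(\<phi> \<longlongrightarrow> B) (at_left L)"
  shows "\<bar>A - B\<bar> \<le> integral {0<..<L} (\<lambda>\<tau>. \<bar>deriv \<phi> \<tau>\<bar>)"
proof -
  obtain h where huc: "uniformly_continuous_on (closure {0<..<L}) h"
    and hg: "\<And>\<tau>. \<tau> \<in> {0<..<L} \<Longrightarrow> g' \<tau> = h \<tau>"
    using uniformly_continuous_on_extension_on_closure[OF uc] by metis
  have hc: "continuous_on {0..L} h" using huc L by (simp add: uniformly_continuous_imp_continuous)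
  have hac: "continuous_on {0..L} (\<lambda>\<tau>. \<bar>h \<tau>\<bar>)" using hc by (intro continuous_intros)
  have hint: "(\<lambda>\<tau>. \<bar>h \<tau>\<bar>) integrable_on {0..L}" using hac by (rule integrable_continuous_real)
  define K where "K = integral {0..L} (\<lambda>\<tau>. \<bar>h \<tau>\<bar>)"
  have Keq: "K = integral {0<..<L} (\<lambda>\<tau>. \<bar>deriv \<phi> \<tau>\<bar>)"
  proof -
    have "K = integral {0<..<L} (\<lambda>\<tau>. \<bar>h \<tau>\<bar>)" unfolding K_def by (rule integral_open_interval_real)
    also have "\<dots> = integral {0<..<L} (\<lambda>\<tau>. \<bar>deriv \<phi> \<tau>\<bar>)"
      using der hg by (intro integral_cong) (metis DERIV_imp_deriv)
    finally show ?thesis .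
  qed
  have ab: "\<bar>\<phi> b - \<phi> a\<bar> \<le> K" if ab: "0 < a" "a \<le> b" "b < L" for a b
  proof -
    have "(g' has_integral (\<phi> b - \<phi> a)) {a..b}"
    proof (rule fundamental_theorem_of_calculus[OF ab(2)])
      fix x assume "x \<in> {a..b}"
      then have "x \<in> {0<..<L}" using ab by auto
      from der[OF this] show "(\<phi> has_vector_derivative g' x) (at x within {a..b})"
        by (simp add: has_real_derivative_iff_has_vector_derivative has_vector_derivative_at_within)
    qed
    moreover have "\<And>x. x \<in> {a..b} \<Longrightarrow> g' x = h x" using hg ab by auto
    ultimately have hi: "(h has_integral (\<phi> b - \<phi> a)) {a..b}"
      using has_integral_eq by metis
    have sub: "{a..b} \<subseteq> {0..L}" using ab by auto
    have "\<bar>\<phi> b - \<phi> a\<bar> = norm (integral {a..b} h)" using hi by (simp add: integral_unique)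
    also have "\<dots> \<le> integral {a..b} (\<lambda>\<tau>. \<bar>h \<tau>\<bar>)"
      using hi integrable_on_subinterval[OF hint sub]
      by (intro integral_norm_bound_integral) (auto simp: has_integral_integrable)
    also have "\<dots> \<le> K" unfolding K_def
      using integrable_on_subinterval[OF hint sub] hint sub by (intro integral_subset_le) auto
    finally show ?thesis .
  qed
  have b: "\<bar>\<phi> b - A\<bar> \<le> K" if b: "0 < b" "b < L" for b
  proof (rule tendsto_upperbound)
    show "((\<lambda>a. \<bar>\<phi> b - \<phi> a\<bar>) \<longlongrightarrow> \<bar>\<phi> b - A\<bar>) (at_right 0)"
      by (intro tendsto_intros limA)
    show "\<forall>\<^sub>F a in at_right 0. \<bar>\<phi> b - \<phi> a\<bar> \<le> K"
      unfolding eventually_at_right_field using b ab by (intro exI[of _ b]) auto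
  qed (simp add: trivial_limit_at_right_real)
  have "\<bar>B - A\<bar> \<le> K"
  proof (rule tendsto_upperbound)
    show "((\<lambda>b. \<bar>\<phi> b - A\<bar>) \<longlongrightarrow> \<bar>B - A\<bar>) (at_left L)"
      by (intro tendsto_intros limB)
    show "\<forall>\<^sub>F b in at_left L. \<bar>\<phi> b - A\<bar> \<le> K"
      unfolding eventually_at_left_field using b L by (intro exI[of _ 0]) auto
  qed (simp add: trivial_limit_at_left_real)
  then show ?thesis using Keq by (simp add: abs_minus_commute)
qed



definition omega :: "('v, 'e, 'z) mgraph_scheme \<Rightarrow> 'v set \<Rightarrow> ('v, 'e) gpt set" where
  "omega G S = Vert ` S \<union> {EPt e \<tau> | e \<tau>. e \<in> edges G \<and> 0 < \<tau> \<and> \<tau> < len G e \<and>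
      ((src G e \<in> S \<and> tgt G e \<in> S) \<or> (src G e \<in> S \<and> \<tau> < len G e / 2) \<or> (tgt G e \<in> S \<and> len G e / 2 < \<tau>))}"

definition mids :: "('v, 'e, 'z) mgraph_scheme \<Rightarrow> 'v set \<Rightarrow> ('v, 'e) gpt set" where
  "mids G S = (\<lambda>e. EPt e (len G e / 2)) ` {e \<in> edges G. (src G e \<in> S) \<noteq> (tgt G e \<in> S)}"

definition eps0 :: "('v, 'e, 'z) mgraph_scheme \<Rightarrow> real" where
  "eps0 G = Min (insert 1 ((\<lambda>e. len G e / 2) ` edges G))"

context
  fixes G :: "('v, 'e, 'z) mgraph_scheme" and S :: "'v set"
  assumes cg: "closed_graph G" and SV: "S \<subseteq> verts G"
begin

lemma cg_facts: "finite (verts G)" "finite (edges G)" "bverts G = {}"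
  "\<And>e. e \<in> edges G \<Longrightarrow> src G e \<in> verts G \<and> tgt G e \<in> verts G \<and> 0 < len G e \<and> 0 < wt G e"
  "\<And>v. v \<in> verts G \<Longrightarrow> 0 < vmeas G v"
  using cg unfolding closed_graph_def by auto

lemma eps0: "0 < eps0 G" "\<And>e. e \<in> edges G \<Longrightarrow> eps0 G \<le> len G e / 2"
proof -
  have fin: "finite (insert 1 ((\<lambda>e. len G e / 2) ` edges G))" using cg_facts by simp
  show "0 < eps0 G" unfolding eps0_def using fin cg_facts(4)
    by (subst Min_gr_iff) auto
  show "\<And>e. e \<in> edges G \<Longrightarrow> eps0 G \<le> len G e / 2" unfolding eps0_def using fin
    by (intro Min_le) auto
qed

lemma omega_sub: "omega G S \<subseteq> gpoints G"
  unfolding omega_def gpoints_def using SV by auto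

lemma in_open:
  assumes x: "x \<in> omega G S"
  shows "\<exists>eps>0. gnbhd G x eps \<subseteq> omega G S"
proof (cases x)
  case (Vert v)
  then have v: "v \<in> S" using x unfolding omega_def by auto
  show ?thesis
  proof (intro exI conjI)
    show "0 < eps0 G" by (rule eps0)
    show "gnbhd G x (eps0 G) \<subseteq> omega G S"
    proof
      fix y assume y: "y \<in> gnbhd G x (eps0 G)"
      show "y \<in> omega G S"
        using y eps0(2) v unfolding Vert gnbhd_def omega_def
        by (auto, fastforce+)
    qed
  qed
next
  case (EPt e s0)
  then have e: "e \<in> edges G" "0 < s0" "s0 < len G e"
    and c: "(src G e \<in> S \<and> tgt G e \<in> S) \<or> (src G e \<in> S \<and> s0 < len G e / 2) \<or> (tgt G e \<in> S \<and> len G e / 2 < s0)"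
    using x unfolding omega_def by auto
  show ?thesis
  proof (cases "src G e \<in> S \<and> tgt G e \<in> S")
    case True
    show ?thesis
      by (rule exI[of _ 1]) (use True e in \<open>auto simp: EPt gnbhd_def omega_def\<close>)
  next
    case False
    show ?thesis
    proof (cases "src G e \<in> S \<and> s0 < len G e / 2")
      case True
      show ?thesis
        by (rule exI[of _ "len G e / 2 - s0"]) (use True e in \<open>auto simp: EPt gnbhd_def omega_def\<close>)
    next
      case False2: False
      then have T: "tgt G e \<in> S \<and> len G e / 2 < s0" using c False by auto
      show ?thesis
        by (rule exI[of _ "s0 - len G e / 2"]) (use T e in \<open>auto simp: EPt gnbhd_def omega_def\<close>)
    qed
  qed
qed

lemma out_closed:
  assumes x: "x \<in> gpoints G" "x \<notin> omega G S" "x \<notin> mids G S"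
  shows "\<exists>eps>0. gnbhd G x eps \<inter> omega G S = {}"
proof (cases x)
  case (Vert v)
  then have v: "v \<notin> S" using x unfolding omega_def by auto
  show ?thesis
  proof (intro exI conjI)
    show "0 < eps0 G" by (rule eps0)
    show "gnbhd G x (eps0 G) \<inter> omega G S = {}"
    proof (rule ccontr)
      assume "gnbhd G x (eps0 G) \<inter> omega G S \<noteq> {}"
      then obtain y where y: "y \<in> gnbhd G x (eps0 G)" "y \<in> omega G S" by blast
      show False
        using y eps0(2) v unfolding Vert gnbhd_def omega_def
        by (auto, fastforce+)
    qed
  qed
next
  case (EPt e s0)
  then have e: "e \<in> edges G" "0 < s0" "s0 < len G e"
    using x unfolding gpoints_def by auto
  have nc: "\<not> ((src G e \<in> S \<and> tgt G e \<in> S) \<or> (src G e \<in> S \<and> s0 < len G e / 2) \<or> (tgt G e \<in> S \<and> len G e / 2 < s0))"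
    using x e unfolding EPt omega_def by auto
  have nm: "(src G e \<in> S) \<noteq> (tgt G e \<in> S) \<Longrightarrow> s0 \<noteq> len G e / 2"
    using x e unfolding EPt mids_def by auto
  show ?thesis
  proof (cases "src G e \<in> S")
    case True
    then have T: "tgt G e \<notin> S" "len G e / 2 < s0" using nc nm by auto
    show ?thesis
      by (rule exI[of _ "s0 - len G e / 2"]) (use T True e in \<open>auto simp: EPt gnbhd_def omega_def\<close>)
  next
    case False
    show ?thesis
    proof (cases "tgt G e \<in> S")
      case True
      then have T: "s0 < len G e / 2" using nc nm False by auto
      show ?thesis
        by (rule exI[of _ "len G e / 2 - s0"]) (use T True False e in \<open>auto simp: EPt gnbhd_def omega_def\<close>)
    next
      case F2: False
      show ?thesis
        by (rule exI[of _ 1]) (use F2 False e in \<open>auto simp: EPt gnbhd_def omega_def\<close>)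
    qed
  qed
qed

lemma frontier_sub: "gfrontier G (omega G S) \<subseteq> mids G S"
proof
  fix x assume x: "x \<in> gfrontier G (omega G S)"
  then have xc: "x \<in> gpoints G" "\<And>eps. eps > 0 \<Longrightarrow> gnbhd G x eps \<inter> omega G S \<noteq> {}"
    and xi: "x \<notin> ginterior G (omega G S)"
    unfolding gfrontier_def gclosure_def by auto
  have "x \<notin> omega G S"
  proof
    assume "x \<in> omega G S"
    then have "x \<in> ginterior G (omega G S)" using in_open omega_sub unfolding ginterior_def by blast
    then show False using xi by simp
  qed
  then show "x \<in> mids G S" using out_closed[OF xc(1) _] xc(2) by blast
qed

lemma mids_finite: "finite (mids G S)"
  unfolding mids_def using cg_facts by simp

lemma admissible_omega: "admissible G (omega G S)"
  unfolding admissible_def gopen_def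
  using omega_sub in_open finite_subset[OF frontier_sub mids_finite] cg_facts(3) by auto

lemma bdry_omega: "bdry_area G (omega G S) \<le> cutw (edges G) (wt G) (src G) (tgt G) S"
proof -
  have v0: "{v \<in> verts G. Vert v \<in> gfrontier G (omega G S)} = {}"
    using frontier_sub unfolding mids_def by auto
  have "(\<Sum>x\<in>{x \<in> gfrontier G (omega G S). x \<notin> Vert ` verts G}. wt G (pt_edge x))
      \<le> (\<Sum>x\<in>mids G S. wt G (pt_edge x))"
    using frontier_sub mids_finite cg_facts(4) by (intro sum_mono2) (auto simp: mids_def pt_edge_def less_imp_le)
  also have "\<dots> = cutw (edges G) (wt G) (src G) (tgt G) S"
    unfolding mids_def cutw_def by (subst sum.reindex) (auto simp: inj_on_def pt_edge_def)
  finally show ?thesis unfolding bdry_area_def v0 by simp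
qed

lemma vmeasure_omega: "vmeasure G (omega G S) = sum (vmeas G) S"
proof -
  have "{v \<in> verts G. Vert v \<in> omega G S} = S" using SV unfolding omega_def by auto
  then show ?thesis unfolding vmeasure_def by simp
qed

lemma vmeasure_compl: "vmeasure G (gpoints G - omega G S) = sum (vmeas G) (verts G - S)"
proof -
  have "{v \<in> verts G. Vert v \<in> gpoints G - omega G S} = verts G - S" using SV
    unfolding omega_def gpoints_def by auto
  then show ?thesis unfolding vmeasure_def by simp
qed

end



lemma bdry_nonneg:
  assumes cg: "closed_graph G"
  shows "0 \<le> bdry_area G \<Omega>"
proof -
  have w: "\<And>e. e \<in> edges G \<Longrightarrow> 0 < wt G e" using cg unfolding closed_graph_def by auto
  have "0 \<le> wt G (pt_edge x)" if xx: "x \<in> gfrontier G \<Omega>" "x \<notin> Vert ` verts G" for x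
  proof -
    have "x \<in> gpoints G" using xx unfolding gfrontier_def gclosure_def by auto
    then obtain e \<tau> where "x = EPt e \<tau>" "e \<in> edges G" using xx unfolding gpoints_def by auto
    then show ?thesis using w by (simp add: pt_edge_def less_imp_le)
  qed
  moreover have "0 \<le> (\<Sum>e\<in>{e \<in> edges G. Vert v \<in> gclosure G (\<Omega> \<inter> edge_interior G e)}. wt G e)" for v
    using w by (intro sum_nonneg) (auto simp: less_imp_le)
  ultimately show ?thesis unfolding bdry_area_def using w
    by (intro add_nonneg_nonneg sum_nonneg) (auto simp: less_imp_le)
qed



lemma G2:
  fixes G :: "('v, 'e) mgraph"
  assumes cg: "closed_graph G" and SV: "S \<subseteq> verts G" and Sne: "S \<noteq> {}"
    and half: "sum (vmeas G) S \<le> sum (vmeas G) (verts G) / 2"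
  shows "iso_const G \<nu> * sum (vmeas G) S powr (1 - inv_exp \<nu>) \<le> cutw (edges G) (wt G) (src G) (tgt G) S
         \<and> 0 \<le> iso_const G \<nu>"
proof -
  define Fam where "Fam = {\<Omega>. admissible G \<Omega> \<and> 0 < vmeasure G \<Omega> \<and> 0 < vmeasure G (gpoints G - \<Omega>)}"
  define val where "val = (\<lambda>\<Omega>. bdry_area G \<Omega> * min (vmeasure G \<Omega>) (vmeasure G (gpoints G - \<Omega>)) powr (inv_exp \<nu> - 1))"
  have I: "iso_const G \<nu> = (INF \<Omega>\<in>Fam. val \<Omega>)" unfolding iso_const_def Fam_def val_def ..
  have finV: "finite (verts G)" and mpos: "\<And>v. v \<in> verts G \<Longrightarrow> 0 < vmeas G v"
    using cg unfolding closed_graph_def by auto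
  define VS where "VS = sum (vmeas G) S"
  have VS: "0 < VS" unfolding VS_def using Sne SV finV mpos
    by (metis finite_subset subset_iff sum_pos)
  have comp: "sum (vmeas G) (verts G - S) = sum (vmeas G) (verts G) - VS"
    unfolding VS_def using finV SV by (simp add: sum_diff)
  have compge: "VS \<le> sum (vmeas G) (verts G - S)" using comp half unfolding VS_def by linarith
  have inF: "omega G S \<in> Fam"
    unfolding Fam_def using admissible_omega[OF cg SV] vmeasure_omega[OF cg SV] vmeasure_compl[OF cg SV]
      VS compge unfolding VS_def by auto
  have vnn: "\<And>\<Omega>. \<Omega> \<in> Fam \<Longrightarrow> 0 \<le> val \<Omega>"
    unfolding val_def using bdry_nonneg[OF cg] by (intro mult_nonneg_nonneg) auto
  have bdd: "bdd_below (val ` Fam)" using vnn by (intro bdd_belowI[of _ 0]) auto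
  have Ile: "iso_const G \<nu> \<le> val (omega G S)" unfolding I by (rule cINF_lower[OF bdd inF])
  have I0: "0 \<le> iso_const G \<nu>" unfolding I using inF vnn by (intro cINF_greatest) auto
  have vo: "val (omega G S) = bdry_area G (omega G S) * VS powr (inv_exp \<nu> - 1)"
    unfolding val_def vmeasure_omega[OF cg SV] vmeasure_compl[OF cg SV] VS_def[symmetric]
    using compge by simp
  have "iso_const G \<nu> * VS powr (1 - inv_exp \<nu>) \<le> bdry_area G (omega G S) * VS powr (inv_exp \<nu> - 1) * VS powr (1 - inv_exp \<nu>)"
    using Ile vo by (intro mult_right_mono) auto
  also have "\<dots> = bdry_area G (omega G S)"
    using VS by (simp add: mult.assoc powr_add[symmetric])
  also have "\<dots> \<le> cutw (edges G) (wt G) (src G) (tgt G) S" by (rule bdry_omega[OF cg SV])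
  finally show ?thesis using I0 unfolding VS_def by simp
qed

lemma G3:
  fixes G :: "('v, 'e) mgraph"
  assumes "split_fun G f"
  shows "vsplit (verts G) (vmeas G) (\<lambda>v. f (Vert v))"
proof -
  have "vmeasure G {x. f x > 0} = (\<Sum>v\<in>{v\<in>verts G. f (Vert v) > 0}. vmeas G v)"
    unfolding vmeasure_def by simp
  moreover have "vmeasure G {x. f x < 0} = (\<Sum>v\<in>{v\<in>verts G. f (Vert v) < 0}. vmeas G v)"
    unfolding vmeasure_def by simp
  moreover have "{v \<in> verts G. Vert v \<in> gpoints G} = verts G" unfolding gpoints_def by auto
  then have "vmeasure G (gpoints G) = (\<Sum>v\<in>verts G. vmeas G v)" unfolding vmeasure_def by simp
  ultimately show ?thesis using assms unfolding split_fun_def vsplit_def by simp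
qed

lemma inv_exp_range:
  assumes "1 \<le> \<nu>"
  shows "0 \<le> inv_exp \<nu>" "inv_exp \<nu> \<le> 1"
proof -
  have "0 \<le> inv_exp \<nu> \<and> inv_exp \<nu> \<le> 1"
  proof (cases "\<nu> = \<infinity>")
    case True then show ?thesis unfolding inv_exp_def by simp
  next
    case False
    then obtain a where a: "\<nu> = ereal a" using assms by (cases \<nu>) auto
    then have "1 \<le> a" using assms by simp
    then show ?thesis unfolding inv_exp_def using a by simp
  qed
  then show "0 \<le> inv_exp \<nu>" "inv_exp \<nu> \<le> 1" by auto
qed

lemma G4:
  fixes G :: "('v, 'e) mgraph"
  assumes "1 \<le> \<nu>"
  shows "lq_norm G (dual_exp \<nu>) f = vnorm (verts G) (vmeas G) (1 - inv_exp \<nu>) (\<lambda>v. f (Vert v))"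
proof (cases "\<nu> = 1")
  case True
  then show ?thesis unfolding lq_norm_def vnorm_def dual_exp_def inv_exp_def by simp
next
  case n1: False
  show ?thesis
  proof (cases "\<nu> = \<infinity>")
    case True
    then show ?thesis unfolding lq_norm_def vnorm_def dual_exp_def inv_exp_def by simp
  next
    case False
    then obtain a where a: "\<nu> = ereal a" using assms by (cases \<nu>) auto
    then have a1: "1 < a" using assms n1 by simp
    have d: "dual_exp \<nu> = ereal (a / (a - 1))" unfolding dual_exp_def using a n1 by simp
    have r: "1 - inv_exp \<nu> = (a - 1) / a" unfolding inv_exp_def using a a1 by (simp add: field_simps)
    have r0: "(a - 1) / a \<noteq> 0" using a1 by simp
    have e1: "1 / ((a - 1) / a) = a / (a - 1)" by simp
    have e2: "1 / (a / (a - 1)) = (a - 1) / a" by simp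
    show ?thesis unfolding lq_norm_def vnorm_def d r using r0 e1 e2 by simp
  qed
qed

lemma G1:
  fixes G :: "('v, 'e) mgraph"
  assumes cg: "closed_graph G" and C1: "C1_Dir G f"
  shows "Dv (edges G) (wt G) (src G) (tgt G) (\<lambda>v. f (Vert v)) \<le> grad_norm1 G f"
  unfolding Dv_def grad_norm1_def
proof (rule sum_mono)
  fix e assume e: "e \<in> edges G"
  have ef: "src G e \<in> verts G" "tgt G e \<in> verts G" "0 < len G e" "0 < wt G e"
    using cg e unfolding closed_graph_def by auto
  define L where "L = len G e"
  define \<phi> where "\<phi> = (\<lambda>s. f (EPt e s))"
  obtain g' where der: "\<And>\<tau>. \<tau> \<in> {0<..<L} \<Longrightarrow> (\<phi> has_real_derivative g' \<tau>) (at \<tau>)"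
    and uc: "uniformly_continuous_on {0<..<L} g'"
    using C1 e unfolding C1_Dir_def L_def \<phi>_def by blast
  have cont: "\<And>x \<delta>. x \<in> gpoints G \<Longrightarrow> \<delta> > 0 \<Longrightarrow> \<exists>eps>0. \<forall>y\<in>gnbhd G x eps. \<bar>f y - f x\<bar> < \<delta>"
    using C1 unfolding C1_Dir_def by blast
  have limA: "(\<phi> \<longlongrightarrow> f (Vert (src G e))) (at_right 0)"
  proof (rule tendstoI)
    fix \<delta> :: real assume "\<delta> > 0"
    moreover have "Vert (src G e) \<in> gpoints G" using ef unfolding gpoints_def by auto
    ultimately obtain eps where eps: "eps > 0" "\<forall>y\<in>gnbhd G (Vert (src G e)) eps. \<bar>f y - f (Vert (src G e))\<bar> < \<delta>"
      using cont by blast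
    have "\<bar>\<phi> y - f (Vert (src G e))\<bar> < \<delta>" if "0 < y" "y < min eps L" for y
    proof -
      have "EPt e y \<in> gnbhd G (Vert (src G e)) eps" using that e unfolding gnbhd_def L_def by auto
      then show ?thesis using eps unfolding \<phi>_def by blast
    qed
    then show "\<forall>\<^sub>F x in at_right 0. dist (\<phi> x) (f (Vert (src G e))) < \<delta>"
      unfolding eventually_at_right_field dist_real_def using eps ef L_def
      by (intro exI[of _ "min eps L"]) auto
  qed
  have limB: "(\<phi> \<longlongrightarrow> f (Vert (tgt G e))) (at_left L)"
  proof (rule tendstoI)
    fix \<delta> :: real assume "\<delta> > 0"
    moreover have "Vert (tgt G e) \<in> gpoints G" using ef unfolding gpoints_def by auto
    ultimately obtain eps where eps: "eps > 0" "\<forall>y\<in>gnbhd G (Vert (tgt G e)) eps. \<bar>f y - f (Vert (tgt G e))\<bar> < \<delta>"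
      using cont by blast
    have "\<bar>\<phi> y - f (Vert (tgt G e))\<bar> < \<delta>" if "max (L - eps) 0 < y" "y < L" for y
    proof -
      have "EPt e y \<in> gnbhd G (Vert (tgt G e)) eps" using that e unfolding gnbhd_def L_def by auto
      then show ?thesis using eps unfolding \<phi>_def by blast
    qed
    then show "\<forall>\<^sub>F x in at_left L. dist (\<phi> x) (f (Vert (tgt G e))) < \<delta>"
      unfolding eventually_at_left_field dist_real_def using eps ef L_def
      by (intro exI[of _ "max (L - eps) 0"]) auto
  qed
  have "\<bar>f (Vert (src G e)) - f (Vert (tgt G e))\<bar> \<le> integral {0<..<L} (\<lambda>\<tau>. \<bar>deriv \<phi> \<tau>\<bar>)"
    using edge_ftc[OF _ der uc limA limB] ef L_def by simp
  then show "wt G e * \<bar>f (Vert (src G e)) - f (Vert (tgt G e))\<bar>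
      \<le> wt G e * integral {0<..<len G e} (\<lambda>t. \<bar>deriv (\<lambda>s. f (EPt e s)) t\<bar>)"
    using ef unfolding L_def \<phi>_def by (intro mult_left_mono) auto
qed

theorem mainTheorem5:
  fixes G :: "('v, 'e) mgraph" and \<nu> :: ereal and f :: "('v, 'e) gpt \<Rightarrow> real"
  assumes "closed_graph G" and "1 \<le> \<nu>" and "C1_Dir G f" and "split_fun G f"
  shows "grad_norm1 G f \<ge> iso_const G \<nu> * lq_norm G (dual_exp \<nu>) f"
proof -
  have cg: "finite (verts G)" "finite (edges G)" "\<And>v. v \<in> verts G \<Longrightarrow> 0 < vmeas G v"
    "\<And>e. e \<in> edges G \<Longrightarrow> src G e \<in> verts G \<and> tgt G e \<in> verts G \<and> 0 < wt G e"
    using assms(1) unfolding closed_graph_def by auto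
  interpret dsetup "verts G" "vmeas G" "edges G" "wt G" "src G" "tgt G" "iso_const G \<nu>" "1 - inv_exp \<nu>"
  proof
    show "\<And>e. e \<in> edges G \<Longrightarrow> 0 \<le> wt G e" using cg(4) by (simp add: less_imp_le)
    show "0 \<le> 1 - inv_exp \<nu>" "1 - inv_exp \<nu> \<le> 1" using inv_exp_range[OF assms(2)] by auto
    show "\<And>S. S \<subseteq> verts G \<Longrightarrow> S \<noteq> {} \<Longrightarrow> sum (vmeas G) S \<le> sum (vmeas G) (verts G) / 2 \<Longrightarrow>
        iso_const G \<nu> * sum (vmeas G) S powr (1 - inv_exp \<nu>) \<le> cutw (edges G) (wt G) (src G) (tgt G) S \<and>
        0 \<le> iso_const G \<nu>"
      using G2[OF assms(1)] by blast
  qed (use cg in auto)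
  have "iso_const G \<nu> * lq_norm G (dual_exp \<nu>) f
      = iso_const G \<nu> * vnorm (verts G) (vmeas G) (1 - inv_exp \<nu>) (\<lambda>v. f (Vert v))"
    by (subst G4[OF assms(2)]) (rule refl)
  also have "\<dots> \<le> Dv (edges G) (wt G) (src G) (tgt G) (\<lambda>v. f (Vert v))"
    by (rule discrete_main[OF G3[OF assms(4)]])
  also have "\<dots> \<le> grad_norm1 G f" by (rule G1[OF assms(1,3)])
  finally show ?thesis .
qed

end
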